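(* For all integers $q\ge2$ and $n\ge\delta\ge2$ there exists a code $\mathcal C\subseteq[q]^n$ with $$|\mathcal C|\ge\frac{\binom{n+q-1}{n}}{(2q+2)^{\delta-2}(2q+1)}$$ such that $d_I(\mathbf u,\mathbf v)\ge 2\delta$ for all distinct $\mathbf u,\mathbf v\in\mathcal C$.
   Context: $[q]=\{1,\dots,q\}$. For $\mathbf u,\mathbf v\in[q]^n$, the insdel distance $d_I(\mathbf u,\mathbf v)$ is the minimum number of insertions and deletions transforming $\mathbf u$ into $\mathbf v$; equivalently $d_I(\mathbf u,\mathbf v)=2n-2\ell_{\rm LCS}(\mathbf u,\mathbf v)$ where $\ell_{\rm LCS}$ is the length of a longest common subsequence. *)

theory Defs
  imports Complex_Main "HOL-Library.Sublist"
begin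

definition lcs_len :: "'a list \<Rightarrow> 'a list \<Rightarrow> nat" where
  "lcs_len u v = Max {length w | w. subseq w u \<and> subseq w v}"

definition insdel_dist :: "'a list \<Rightarrow> 'a list \<Rightarrow> nat" where
  "insdel_dist u v = length u + length v - 2 * lcs_len u v"

definition words :: "nat \<Rightarrow> nat \<Rightarrow> nat list set" where
  "words q n = {u. length u = n \<and> set u \<subseteq> {1..q}}"

end

theory Submission
  imports Defs "HOL-Computational_Algebra.Primes" "HOL-Computational_Algebra.Polynomial" "HOL-Library.Discrete_Functions"
begin

lemma Suc_div_split:
  fixes m d :: nat assumes "d > 0"
  shows "Suc m div d = m div d + (if d dvd Suc m then 1 else 0)"
  using assms by (simp add: div_Suc mod_eq_0_iff_dvd)

lemma mult_set_eq:
  fixes p x :: nat assumes "prime p" "x > 0"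
  shows "{i\<in>{1..x}. p^i dvd x} = {1..multiplicity p x}"
proof -
  have np: "\<not> is_unit p" using assms(1) by auto
  have le: "multiplicity p x \<le> x"
  proof -
    have "p ^ multiplicity p x \<le> x" using multiplicity_dvd[of p x] assms(2) by (simp add: dvd_imp_le)
    moreover have "multiplicity p x < 2 ^ multiplicity p x" by simp
    moreover have "2 ^ multiplicity p x \<le> p ^ multiplicity p x" using prime_ge_2_nat[OF assms(1)] by (simp add: power_mono)
    ultimately show ?thesis by linarith
  qed
  show ?thesis
  proof (intro set_eqI iffI)
    fix i assume "i \<in> {i\<in>{1..x}. p^i dvd x}"
    then show "i \<in> {1..multiplicity p x}" using multiplicity_geI[of x p i] assms np by auto
  next
    fix i assume "i \<in> {1..multiplicity p x}"
    then show "i \<in> {i\<in>{1..x}. p^i dvd x}" using multiplicity_dvd'[of i p x] le by auto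
  qed
qed

lemma legendre:
  fixes p m :: nat assumes "prime p"
  shows "multiplicity p (fact m) = (\<Sum>i\<in>{1..m}. m div p^i)"
proof (induction m)
  case 0 then show ?case by simp
next
  case (Suc m)
  have p2: "p \<ge> 2" using prime_ge_2_nat[OF assms] .
  have z: "m div p ^ Suc m = 0"
  proof -
    have "m < 2 ^ Suc m" by (metis Suc_lessD less_exp)
    also have "\<dots> \<le> p ^ Suc m" by (rule power_mono) (use p2 in auto)
    finally show ?thesis by simp
  qed
  have e1: "(\<Sum>i\<in>{1..m}. m div p^i) = (\<Sum>i\<in>{1..Suc m}. m div p^i)"
    using z by simp
  have e2: "multiplicity p (Suc m) = (\<Sum>i\<in>{1..Suc m}. (if p^i dvd Suc m then 1 else 0))"
    using mult_set_eq[OF assms, of "Suc m"] by (subst sum.inter_filter[symmetric]) simp_all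
  have "fact (Suc m) = Suc m * (fact m :: nat)" by simp
  then have "multiplicity p (fact (Suc m) :: nat) = multiplicity p (Suc m) + multiplicity p (fact m :: nat)"
    using prime_elem_multiplicity_mult_distrib[of p "Suc m" "fact m"] assms by simp
  also have "\<dots> = (\<Sum>i\<in>{1..Suc m}. (if p^i dvd Suc m then 1 else 0)) + (\<Sum>i\<in>{1..Suc m}. m div p^i)"
    using Suc e1 e2 by simp
  also have "\<dots> = (\<Sum>i\<in>{1..Suc m}. Suc m div p^i)"
    by (subst sum.distrib[symmetric], rule sum.cong, simp, subst Suc_div_split, use p2 in simp_all)
  finally show ?case .
qed

lemma a0: fixes n d :: nat assumes "d \<noteq> 0"
  shows "(2*n) div d = 2*(n div d) + (2*(n mod d)) div d"
proof -
  have e0: "2*n = 2*(n mod d) + 2*((n div d)*d)"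
    using div_mult_mod_eq[of n d] by linarith
  have e: "2*n = 2*(n mod d) + (2*(n div d))*d" using e0 by (simp add: mult.assoc)
  show ?thesis by (subst e) (simp add: assms)
qed
lemma a1: fixes n d :: nat shows "2 * (n div d) \<le> (2*n) div d"
  by (cases "d = 0") (simp_all add: a0[of d n])
lemma a2: fixes n d :: nat shows "(2*n) div d \<le> 2 * (n div d) + 1"
proof (cases "d = 0")
  case False
  have "2*(n mod d) < 2 * d" using False by simp
  then have "(2*(n mod d)) div d < 2" using False by (simp add: div_less_iff_less_mult)
  then show ?thesis using a0[OF False, of n] by simp
qed simp

lemma mult_central:
  fixes p n :: nat assumes "prime p"
  shows "multiplicity p ((2*n) choose n) = (\<Sum>i\<in>{1..2*n}. (2*n) div p^i - 2*(n div p^i))"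
proof -
  have p2: "p \<ge> 2" using prime_ge_2_nat[OF assms] .
  have "fact n * fact (2*n - n) * ((2*n) choose n) = (fact (2*n) :: nat)"
    by (rule binomial_fact_lemma) simp
  then have f: "fact (2*n) = (fact n * fact n) * ((2*n) choose n :: nat)" by simp
  have nz: "(fact n :: nat) \<noteq> 0" "((2*n) choose n) \<noteq> 0" by simp_all
  have "multiplicity p (fact (2*n) :: nat) = 2 * multiplicity p (fact n :: nat) + multiplicity p ((2*n) choose n)"
    unfolding f using assms nz by (simp add: prime_elem_multiplicity_mult_distrib)
  then have m: "multiplicity p ((2*n) choose n) = multiplicity p (fact (2*n) :: nat) - 2 * multiplicity p (fact n :: nat)"
    by simp
  have ext: "(\<Sum>i\<in>{1..n}. n div p^i) = (\<Sum>i\<in>{1..2*n}. n div p^i)"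
  proof (rule sum.mono_neutral_left)
    show "\<forall>i\<in>{1..2*n} - {1..n}. n div p ^ i = 0"
    proof
      fix i assume "i \<in> {1..2*n} - {1..n}"
      then have "i > n" by auto
      have "n < 2 ^ n" by (rule less_exp)
      also have "\<dots> \<le> 2 ^ i" using \<open>i > n\<close> by (simp add: power_increasing)
      also have "\<dots> \<le> p ^ i" by (rule power_mono) (use p2 in auto)
      finally show "n div p ^ i = 0" by simp
    qed
  qed auto
  show ?thesis
    unfolding m legendre[OF assms] ext sum_distrib_left
    by (subst sum_subtractf_nat) (auto intro: a1)
qed

lemma term_zero:
  fixes p n i :: nat assumes "2*n < p^i"
  shows "(2*n) div p^i - 2*(n div p^i) = 0"
  using assms by simp

lemma VA:
  fixes p n :: nat assumes "prime p" "n \<ge> 1"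
  shows "p ^ multiplicity p ((2*n) choose n) \<le> 2*n"
proof -
  have p2: "p \<ge> 2" using prime_ge_2_nat[OF assms(1)] .
  define S where "S = {i\<in>{1..2*n}. p^i \<le> 2*n}"
  have "multiplicity p ((2*n) choose n) \<le> (\<Sum>i\<in>{1..2*n}. (if p^i \<le> 2*n then 1 else 0))"
    unfolding mult_central[OF assms(1)]
  proof (rule sum_mono)
    fix i assume "i \<in> {1..2*n}"
    show "(2*n) div p^i - 2*(n div p^i) \<le> (if p^i \<le> 2*n then 1 else 0)"
      using a2[of n "p^i"] by auto
  qed
  also have "\<dots> = card S" unfolding S_def by (subst sum.inter_filter[symmetric]) simp_all
  finally have v: "multiplicity p ((2*n) choose n) \<le> card S" .
  have "p ^ card S \<le> 2*n"
  proof (cases "S = {}")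
    case True then show ?thesis using assms(2) by simp
  next
    case False
    have fin: "finite S" unfolding S_def by simp
    define e where "e = Max S"
    have "e \<in> S" unfolding e_def using Max_in[OF fin False] .
    then have pe: "p ^ e \<le> 2*n" unfolding S_def by simp
    have "S \<subseteq> {1..e}" unfolding e_def using Max_ge[OF fin] S_def by auto
    then have "card S \<le> e" by (metis card_atLeastAtMost card_mono finite_atLeastAtMost diff_Suc_1)
    then have "p ^ card S \<le> p ^ e" using p2 by (simp add: power_increasing)
    then show ?thesis using pe by simp
  qed
  moreover have "p ^ multiplicity p ((2*n) choose n) \<le> p ^ card S" using v p2 by (simp add: power_increasing)
  ultimately show ?thesis by simp
qed

lemma VB:
  fixes p n :: nat assumes "prime p" "n \<ge> 1" "2*n < p*p"
  shows "multiplicity p ((2*n) choose n) = (2*n) div p - 2*(n div p)"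
proof -
  have p2: "p \<ge> 2" using prime_ge_2_nat[OF assms(1)] .
  have "multiplicity p ((2*n) choose n) = (\<Sum>i\<in>{1..2*n}. (2*n) div p^i - 2*(n div p^i))"
    by (rule mult_central[OF assms(1)])
  also have "\<dots> = (\<Sum>i\<in>{1}. (2*n) div p^i - 2*(n div p^i))"
  proof (rule sum.mono_neutral_right)
    show "\<forall>i\<in>{1..2 * n} - {1}. 2 * n div p ^ i - 2 * (n div p ^ i) = 0"
    proof
      fix i assume "i \<in> {1..2 * n} - {1}"
      then have "i \<ge> 2" by auto
      have "p*p = p^2" by (simp add: power2_eq_square)
      also have "\<dots> \<le> p^i" using \<open>i \<ge> 2\<close> p2 by (simp add: power_increasing)
      finally show "2 * n div p ^ i - 2 * (n div p ^ i) = 0" using assms(3) by simp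
    qed
  qed (use assms(2) in auto)
  finally show ?thesis by simp
qed

lemma VB1:
  fixes p n :: nat assumes "prime p" "n \<ge> 1" "2*n < p*p"
  shows "multiplicity p ((2*n) choose n) \<le> 1"
  using VB[OF assms] a2[of n p] by simp

lemma VB0:
  fixes p n :: nat assumes "prime p" "n \<ge> 1" "2*n < p*p" "p \<le> n" "2*n < 3*p"
  shows "multiplicity p ((2*n) choose n) = 0"
proof -
  have p2: "p \<ge> 2" using prime_ge_2_nat[OF assms(1)] .
  have "n div p = 1" using assms(4,5) p2 by (intro div_nat_eqI) auto
  moreover have "(2*n) div p = 2" using assms(4,5) p2 by (intro div_nat_eqI) auto
  ultimately show ?thesis using VB[OF assms(1-3)] by simp
qed

lemma prod_primes_dvd:
  fixes N :: nat
  assumes "finite P" "\<forall>p\<in>P. prime p \<and> p dvd N"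
  shows "\<Prod>P dvd N"
  using assms
proof (induction P rule: finite_induct)
  case empty then show ?case by simp
next
  case (insert p P)
  have "coprime p (\<Prod>P)"
  proof (rule prime_imp_coprime)
    show "prime p" using insert.prems by simp
    show "\<not> p dvd \<Prod>P"
    proof
      assume "p dvd \<Prod>P"
      then obtain q where "q \<in> P" "p dvd q" using prime_dvd_prod_iff[of P p "\<lambda>x. x"] insert by auto
      then have "p = q" using insert.prems primes_dvd_imp_eq by (metis insert_iff)
      then show False using \<open>q \<in> P\<close> insert.hyps by simp
    qed
  qed
  then show ?case using insert by (simp add: divides_mult)
qed

lemma binom_odd_le:
  fixes k :: nat shows "(2*k+1) choose k \<le> 4^k"
proof -
  have sym: "(2*k+1) choose k = (2*k+1) choose (k+1)"
    using binomial_symmetric[of k "2*k+1"] by simp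
  have "2 * ((2*k+1) choose k) = (\<Sum>i\<in>{k,k+1}. (2*k+1) choose i)" using sym by simp
  also have "\<dots> \<le> (\<Sum>i\<le>2*k+1. (2*k+1) choose i)" by (rule sum_mono2) auto
  also have "\<dots> = 2^(2*k+1)" by (rule choose_row_sum)
  also have "\<dots> = 2 * 4^k" by (simp add: power_mult)
  finally show ?thesis by simp
qed

lemma primes_mid_dvd:
  fixes k p :: nat assumes "prime p" "k+1 < p" "p \<le> 2*k+1"
  shows "p dvd (2*k+1) choose k"
proof -
  have "fact k * fact (2*k+1 - k) * ((2*k+1) choose k) = (fact (2*k+1) :: nat)"
    by (rule binomial_fact_lemma) simp
  then have f: "(fact k * fact (k+1)) * ((2*k+1) choose k) = (fact (2*k+1) :: nat)"
    by (simp add: Suc_diff_le)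
  have "p dvd (fact (2*k+1) :: nat)" using prime_dvd_fact_iff[OF assms(1)] assms(3) by blast
  then have "p dvd (fact k * fact (k+1)) * ((2*k+1) choose k)" using f by simp
  moreover have "\<not> p dvd (fact k :: nat)" using prime_dvd_fact_iff[OF assms(1), of k] assms(2) by linarith
  moreover have "\<not> p dvd (fact (k+1) :: nat)" using prime_dvd_fact_iff[OF assms(1), of "k+1"] assms(2) by linarith
  ultimately show ?thesis using assms(1) by (simp add: prime_dvd_mult_iff)
qed

lemma primorial_le:
  "\<Prod>{p::nat. prime p \<and> p \<le> m} \<le> 4^m"
proof (induction m rule: less_induct)
  case (less m)
  show ?case
  proof (cases "m \<le> 2")
    case True
    have sub: "{p::nat. prime p \<and> p \<le> m} \<subseteq> {2}"
      using True prime_ge_2_nat by (auto simp: le_antisym)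
    show ?thesis
    proof (cases "m = 0")
      case True
      have e: "{p::nat. prime p \<and> p \<le> m} = {}" using True prime_ge_2_nat by force
      show ?thesis unfolding e by simp
    next
      case False
      have "\<Prod>{p::nat. prime p \<and> p \<le> m} dvd \<Prod>{2::nat}"
        by (rule prod_dvd_prod_subset[OF _ sub]) simp
      then have "\<Prod>{p::nat. prime p \<and> p \<le> m} \<le> 2" by (simp add: dvd_imp_le)
      moreover have "(4::nat) \<le> 4^m" using False by (cases m) auto
      ultimately show ?thesis by simp
    qed
  next
    case False
    show ?thesis
    proof (cases "even m")
      case True
      have "\<not> prime m" using True False using prime_odd_nat by auto
      have "{p::nat. prime p \<and> p \<le> m} = {p. prime p \<and> p \<le> m - 1}"
      proof (intro Collect_cong)
        fix p show "(prime p \<and> p \<le> m) = (prime p \<and> p \<le> m - 1)"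
          using \<open>\<not> prime m\<close> by (cases "p = m") auto
      qed
      also have "\<Prod>\<dots> \<le> 4^(m-1)" using less.IH[of "m-1"] False by simp
      also have "\<dots> \<le> 4^m" by (simp add: power_increasing)
      finally show ?thesis .
    next
      case odd: False
      then obtain k where m: "m = 2*k+1" using oddE by blast
      have k1: "k \<ge> 1" using m \<open>\<not> m \<le> 2\<close> by simp
      define A where "A = {p::nat. prime p \<and> p \<le> k+1}"
      define T where "T = {p::nat. prime p \<and> k+1 < p \<and> p \<le> 2*k+1}"
      have split: "{p::nat. prime p \<and> p \<le> m} = A \<union> T" unfolding A_def T_def m by auto
      have fA: "finite A" unfolding A_def by simp
      have fT: "finite T" unfolding T_def by simp
      have disj: "A \<inter> T = {}" unfolding A_def T_def by auto
      have "\<Prod>{p::nat. prime p \<and> p \<le> m} = \<Prod>A * \<Prod>T"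
        unfolding split using prod.union_disjoint[OF fA fT disj] by simp
      also have "\<Prod>A \<le> 4^(k+1)" unfolding A_def using less.IH[of "k+1"] m k1 by simp
      also have "\<Prod>T \<le> 4^k"
      proof -
        have "\<Prod>T dvd (2*k+1) choose k"
          using fT primes_mid_dvd unfolding T_def by (intro prod_primes_dvd) auto
        then have "\<Prod>T \<le> (2*k+1) choose k" by (rule dvd_imp_le) simp
        also have "\<dots> \<le> 4^k" by (rule binom_odd_le)
        finally show ?thesis .
      qed
      also have "4^(k+1) * 4^k = (4::nat)^m" unfolding m by (simp add: power_add[symmetric])
      finally show ?thesis by simp
    qed
  qed
qed

lemma e_bound:
  fixes m :: nat assumes "m \<ge> 1"
  shows "(m+1)^m \<le> 3 * m^m"
proof -
  have mpos: "real m > 0" using assms by simp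
  have "1 + 1 / real m \<le> exp (1 / real m)" by (rule exp_ge_add_one_self)
  then have "(1 + 1 / real m)^m \<le> exp (1 / real m) ^ m"
    by (rule power_mono) (use mpos in simp)
  also have "\<dots> = exp (real m * (1 / real m))" by (rule exp_of_nat_mult[symmetric])
  also have "\<dots> = exp 1" using mpos by simp
  also have "\<dots> \<le> 3" by (rule exp_le)
  finally have h: "(1 + 1 / real m)^m \<le> 3" .
  have "real m * (1 + 1 / real m) = real m + 1" using mpos by (simp add: field_simps)
  then have "real ((m+1)^m) = (real m * (1 + 1 / real m))^m" by (simp add: add.commute)
  also have "\<dots> = real m ^ m * (1 + 1 / real m)^m" by (simp add: power_mult_distrib)
  also have "\<dots> \<le> real m ^ m * 3" using h by (intro mult_left_mono) simp_all
  finally have "real ((m+1)^m) \<le> real (3 * m^m)" by simp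
  then show ?thesis by linarith
qed

lemma pow6_ratio:
  fixes a b :: nat assumes "5 * a \<le> 6 * b"
  shows "a^6 \<le> 4 * b^6"
proof -
  have "(5 * a)^6 \<le> (6 * b)^6" using assms by (rule power_mono) simp
  then have "15625 * a^6 \<le> 46656 * b^6" by (simp add: power_mult_distrib)
  then show ?thesis by linarith
qed

lemma pw1:
  fixes x t :: nat shows "x^(6*(t+1)+6) = x^6 * (x^(t+1))^6"
proof -
  have "6*(t+1)+6 = 6 + (t+1)*6" by simp
  then show ?thesis by (simp only: power_add power_mult)
qed

lemma pw2:
  fixes x y t :: nat shows "x^6 * (3 * y^(t+1))^6 = 729 * x^6 * y^(6*t+6)"
proof -
  have "6*t+6 = (t+1)*6" by simp
  then show ?thesis by (simp only: power_mult_distrib power_mult) simp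
qed

lemma M_lemma:
  fixes t :: nat assumes "t \<ge> 32"
  shows "729 * (t+2)^6 \<le> (2::nat)^(2*t+1)"
  using assms
proof (induction t rule: dec_induct)
  case base then show ?case by simp
next
  case (step t)
  have "(Suc t + 2)^6 \<le> 4 * (t+2)^6" by (rule pow6_ratio) (use step in simp)
  then have "729 * (Suc t + 2)^6 \<le> 4 * (729 * (t+2)^6)" by simp
  also have "\<dots> \<le> 4 * 2^(2*t+1)" using step.IH by simp
  also have "\<dots> = 2^(2 * Suc t + 1)" by simp
  finally show ?case .
qed

lemma base33: "(33::nat)^198 < 2^1024" by simp

lemma N_lemma:
  fixes t :: nat assumes "t \<ge> 32"
  shows "(t+1)^(6*t+6) < (2::nat)^(t*t)"
  using assms
proof (induction t rule: dec_induct)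
  case base then show ?case using base33 by simp
next
  case (step t)
  have e: "(t+2)^(t+1) \<le> 3 * (t+1)^(t+1)" using e_bound[of "t+1"] by simp
  have "(Suc t + 1)^(6 * Suc t + 6) = (t+2)^6 * ((t+2)^(t+1))^6"
    using pw1[of "t+2" t] by simp
  also have "\<dots> \<le> (t+2)^6 * (3 * (t+1)^(t+1))^6"
    using e by (intro mult_left_mono power_mono) simp_all
  also have "\<dots> = 729 * (t+2)^6 * (t+1)^(6*t+6)"
    by (rule pw2)
  also have "\<dots> < 729 * (t+2)^6 * 2^(t*t)"
    using step.IH by simp
  also have "\<dots> \<le> 2^(2*t+1) * 2^(t*t)"
    using M_lemma[OF step.hyps(1)] by simp
  also have "\<dots> = 2^(Suc t * Suc t)"
    by (simp add: power_add[symmetric] algebra_simps)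
  finally show ?case .
qed

lemma pw3:
  fixes x y t k :: nat shows "(x^(t+1) * y^k)^3 = x^(3*t+3) * y^(3*k)"
proof -
  have a: "3*t+3 = (t+1)*3" "3*k = k*3" by simp_all
  show ?thesis unfolding a by (simp only: power_mult_distrib power_mult)
qed

lemma central_lower_nat:
  fixes n :: nat assumes "n > 0"
  shows "4^n \<le> ((2*n) choose n) * (2*n)"
proof -
  have "4^n / (2*real n) \<le> real ((2*n) choose n)" by (rule central_binomial_lower_bound[OF assms])
  then have "real (4^n) \<le> real ((2*n) choose n) * (2 * real n)" using assms by (simp add: field_simps)
  then have "real (4^n) \<le> real (((2*n) choose n) * (2*n))" by simp
  then show ?thesis by linarith
qed

lemma bertrand_large:
  fixes n :: nat assumes n: "n \<ge> 512"
  shows "\<exists>p. prime p \<and> n < p \<and> p \<le> 2*n"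
proof (rule ccontr)
  assume H: "\<not> ?thesis"
  define C where "C = (2*n) choose n"
  have Cpos: "C > 0" unfolding C_def by simp
  define PF where "PF = prime_factors C"
  have finPF: "finite PF" unfolding PF_def by simp
  have PF: "prime p \<and> p dvd C \<and> multiplicity p C \<ge> 1 \<and> p \<le> n" if "p \<in> PF" for p
  proof -
    have pr: "prime p" and dv: "p dvd C" using that Cpos unfolding PF_def by (auto simp: in_prime_factors_iff)
    have v: "multiplicity p C \<ge> 1"
      using multiplicity_geI[of C p 1] dv Cpos pr by (cases "p = 1") auto
    have "p \<le> p ^ multiplicity p C" using v prime_ge_2_nat[OF pr]
      by (metis One_nat_def power_increasing power_one_right le_trans less_imp_le_nat one_less_numeral_iff semiring_norm(76) order_refl)
    also have "\<dots> \<le> 2*n" unfolding C_def using VA[OF pr] n by simp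
    finally have "p \<le> 2*n" .
    then have "p \<le> n" using H pr by (meson not_le)
    then show ?thesis using pr dv v by simp
  qed
  define t where "t = floor_sqrt (2*n)"
  define A where "A = {p\<in>PF. p*p \<le> 2*n}"
  define B where "B = {p\<in>PF. \<not> p*p \<le> 2*n}"
  have fA: "finite A" "finite B" unfolding A_def B_def using finPF by simp_all
  have dAB: "A \<inter> B = {}" unfolding A_def B_def by auto
  have uAB: "PF = A \<union> B" unfolding A_def B_def by auto
  have "C = (\<Prod>p\<in>PF. p ^ multiplicity p C)" unfolding PF_def using prime_factorization_nat[OF Cpos] .
  also have "\<dots> = (\<Prod>p\<in>A. p ^ multiplicity p C) * (\<Prod>p\<in>B. p ^ multiplicity p C)"
    unfolding uAB by (rule prod.union_disjoint[OF fA dAB])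
  also have "(\<Prod>p\<in>A. p ^ multiplicity p C) \<le> (\<Prod>p\<in>A. 2*n)"
  proof (rule prod_mono)
    fix p assume "p \<in> A"
    then have "prime p" using PF unfolding A_def by auto
    then show "0 \<le> p ^ multiplicity p C \<and> p ^ multiplicity p C \<le> 2*n"
      unfolding C_def using VA n by simp
  qed
  also have "(\<Prod>p\<in>A. 2*n) \<le> (2*n)^t"
  proof -
    have "A \<subseteq> {1..t}"
    proof
      fix p assume "p \<in> A"
      then have "p*p \<le> 2*n" "prime p" using PF unfolding A_def by auto
      then show "p \<in> {1..t}" unfolding t_def using prime_ge_2_nat[of p]
        by (auto intro!: le_floor_sqrtI simp: power2_eq_square)
    qed
    then have "card A \<le> t" using card_mono[of "{1..t}" A] by simp
    then have "(2*n)^card A \<le> (2*n)^t" using n by (intro power_increasing) simp_all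
    then show ?thesis by simp
  qed
  also have "(\<Prod>p\<in>B. p ^ multiplicity p C) \<le> 4^((2*n) div 3)"
  proof -
    have eqB: "(\<Prod>p\<in>B. p ^ multiplicity p C) = \<Prod>B"
    proof (rule prod.cong)
      fix p assume "p \<in> B"
      then have pp: "prime p" "multiplicity p C \<ge> 1" "2*n < p*p" using PF unfolding B_def by auto
      have "multiplicity p C \<le> 1" unfolding C_def by (rule VB1) (use pp n in auto)
      then have "multiplicity p C = 1" using pp by simp
      then show "p ^ multiplicity p C = p" by simp
    qed simp
    have sub: "B \<subseteq> {p. prime p \<and> p \<le> (2*n) div 3}"
    proof
      fix p assume "p \<in> B"
      then have pp: "prime p" "multiplicity p C \<ge> 1" "2*n < p*p" "p \<le> n" using PF unfolding B_def by auto
      have "\<not> 2*n < 3*p"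
      proof
        assume "2*n < 3*p"
        then have "multiplicity p C = 0" unfolding C_def by (intro VB0) (use pp n in auto)
        then show False using pp by simp
      qed
      then show "p \<in> {p. prime p \<and> p \<le> (2*n) div 3}" using pp by auto
    qed
    have "\<Prod>B dvd \<Prod>{p. prime p \<and> p \<le> (2*n) div 3}"
      by (rule prod_dvd_prod_subset[OF _ sub]) simp
    then have "\<Prod>B \<le> \<Prod>{p. prime p \<and> p \<le> (2*n) div 3}"
      by (rule dvd_imp_le) (simp add: prime_gt_0_nat)
    also have "\<dots> \<le> 4^((2*n) div 3)" by (rule primorial_le)
    finally show ?thesis using eqB by simp
  qed
  finally have Cle: "C \<le> (2*n)^t * 4^((2*n) div 3)" by simp
  have "4^n \<le> C * (2*n)" unfolding C_def using central_lower_nat n by simp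
  also have "\<dots> \<le> (2*n)^t * 4^((2*n) div 3) * (2*n)" using Cle by simp
  finally have h1: "4^n \<le> (2*n)^(t+1) * 4^((2*n) div 3)" by (simp add: algebra_simps)
  have "(4::nat)^n * 4^(2*n) = (4^n)^3" by (simp add: power_add[symmetric] power_mult[symmetric])
  also have "\<dots> \<le> ((2*n)^(t+1) * 4^((2*n) div 3))^3" using h1 by (rule power_mono) simp
  also have "\<dots> = (2*n)^(3*t+3) * 4^(3*((2*n) div 3))"
    by (rule pw3)
  also have "\<dots> \<le> (2*n)^(3*t+3) * 4^(2*n)"
    by (intro mult_left_mono power_increasing) simp_all
  finally have h2: "4^n \<le> (2*n)^(3*t+3)" by simp
  have tt: "t*t \<le> 2*n" "2*n < (t+1)*(t+1)"
    unfolding t_def using floor_sqrt_power2_le[of "2*n"] Suc_floor_sqrt_power2_gt[of "2*n"]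
    by (simp_all add: power2_eq_square)
  have t32: "t \<ge> 32"
  proof (rule ccontr)
    assume "\<not> t \<ge> 32"
    then have "(t+1)*(t+1) \<le> 32*32" by (intro mult_le_mono) simp_all
    then show False using tt n by simp
  qed
  have "(2*n)^(3*t+3) \<le> ((t+1)*(t+1))^(3*t+3)"
    using tt by (intro power_mono) simp_all
  also have "\<dots> = (t+1)^(6*t+6)" by (simp add: power_mult[symmetric] power2_eq_square[symmetric] algebra_simps)
  also have "\<dots> < 2^(t*t)" by (rule N_lemma[OF t32])
  also have "\<dots> \<le> 2^(2*n)" using tt by (intro power_increasing) simp_all
  also have "\<dots> = 4^n" by (simp add: power_mult)
  finally show False using h2 by simp
qed

lemma prime_small:
  fixes p :: nat
  assumes "p \<ge> 2" "\<forall>d\<in>set [2..<k]. \<not> d dvd p" "p < k*k"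
  shows "prime p"
proof (rule ccontr)
  assume "\<not> prime p"
  then obtain d where d: "d dvd p" "d \<noteq> 1" "d \<noteq> p" using assms(1) prime_nat_iff by auto
  then obtain e where e: "p = d * e" by blast
  have "d \<ge> 2" using d assms(1) by (metis One_nat_def dvd_0_left_iff less_2_cases not_le not_numeral_le_zero)
  have "e \<ge> 2" using d e assms(1) by (metis One_nat_def less_2_cases mult_0_right mult.right_neutral not_le not_numeral_le_zero)
  have "e dvd p" using e by simp
  have "d < k \<or> e < k"
  proof (rule ccontr)
    assume "\<not> ?thesis" then have "k*k \<le> d*e" by (simp add: mult_le_mono)
    then show False using e assms(3) by simp
  qed
  then show False
  proof
    assume "d < k" then show False using assms(2) d \<open>d\<ge>2\<close> by auto
  next
    assume "e < k" then show False using assms(2) \<open>e dvd p\<close> \<open>e\<ge>2\<close> by auto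
  qed
qed

lemma bertrand:
  fixes n :: nat assumes "n \<ge> 1"
  shows "\<exists>p. prime p \<and> n < p \<and> p \<le> 2*n"
proof -
  have P: "prime (2::nat)" "prime (3::nat)" by simp_all
  have P5: "prime (5::nat)" by (rule prime_small[where k=3]) (simp_all add: upt_rec)
  have P7: "prime (7::nat)" by (rule prime_small[where k=3]) (simp_all add: upt_rec)
  have P13: "prime (13::nat)" by (rule prime_small[where k=4]) (simp_all add: upt_rec)
  have P23: "prime (23::nat)" by (rule prime_small[where k=5]) (simp_all add: upt_rec)
  have P43: "prime (43::nat)" by (rule prime_small[where k=7]) (simp_all add: upt_rec)
  have P83: "prime (83::nat)" by (rule prime_small[where k=10]) (simp_all add: upt_rec)
  have P163: "prime (163::nat)" by (rule prime_small[where k=13]) (simp_all add: upt_rec)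
  have P317: "prime (317::nat)" by (rule prime_small[where k=18]) (simp_all add: upt_rec)
  have P631: "prime (631::nat)" by (rule prime_small[where k=26]) (simp_all add: upt_rec)
  show ?thesis
  proof (cases "n \<ge> 512")
    case True then show ?thesis by (rule bertrand_large)
  next
    case False
    consider "n < 2" | "2 \<le> n \<and> n < 3" | "3 \<le> n \<and> n < 5" | "5 \<le> n \<and> n < 7" | "7 \<le> n \<and> n < 13"
      | "13 \<le> n \<and> n < 23" | "23 \<le> n \<and> n < 43" | "43 \<le> n \<and> n < 83" | "83 \<le> n \<and> n < 163"
      | "163 \<le> n \<and> n < 317" | "317 \<le> n \<and> n < 512" using False by linarith
    then show ?thesis
    proof cases
      case 1 then show ?thesis using P(1) assms by (intro exI[of _ 2]) simp
    next
      case 2 then show ?thesis using P(2) by (intro exI[of _ 3]) simp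
    next
      case 3 then show ?thesis using P5 by (intro exI[of _ 5]) simp
    next
      case 4 then show ?thesis using P7 by (intro exI[of _ 7]) simp
    next
      case 5 then show ?thesis using P13 by (intro exI[of _ 13]) simp
    next
      case 6 then show ?thesis using P23 by (intro exI[of _ 23]) simp
    next
      case 7 then show ?thesis using P43 by (intro exI[of _ 43]) simp
    next
      case 8 then show ?thesis using P83 by (intro exI[of _ 83]) simp
    next
      case 9 then show ?thesis using P163 by (intro exI[of _ 163]) simp
    next
      case 10 then show ?thesis using P317 by (intro exI[of _ 317]) simp
    next
      case 11 then show ?thesis using P631 by (intro exI[of _ 631]) simp
    qed
  qed
qed


definition Gp :: "nat multiset \<Rightarrow> int poly" where
  "Gp M = (\<Prod>x\<in>#M. [:1, - int x:])"

lemma Gp_plus: "Gp (M + N) = Gp M * Gp N" by (simp add: Gp_def)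

lemma Gp_poly: "poly (Gp M) u = (\<Prod>x\<in>#M. 1 - int x * u)"
  by (simp add: Gp_def poly_prod_mset algebra_simps)

lemma Gp_coeff0: "coeff (Gp M) 0 = 1"
  using Gp_poly[of M 0] by (simp add: poly_0_coeff_0)

lemma Gp_degree: "degree (Gp M) \<le> size M"
proof (induction M)
  case empty then show ?case by (simp add: Gp_def)
next
  case (add x M)
  have eq: "Gp (add_mset x M) = [:1, - int x:] * Gp M" by (simp add: Gp_def)
  have "degree (Gp (add_mset x M)) \<le> degree [:1, - int x:] + degree (Gp M)"
    unfolding eq by (rule degree_mult_le)
  also have "\<dots> \<le> 1 + size M" using add by simp
  finally show ?case by simp
qed

lemma cancel_low:
  fixes A D :: "int poly" and m :: int
  assumes A0: "coeff A 0 = 1" and H: "\<forall>j\<le>r. m dvd coeff (A * D) j"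
  shows "\<forall>j\<le>r. m dvd coeff D j"
proof (intro allI impI)
  fix j assume "j \<le> r"
  then show "m dvd coeff D j"
  proof (induction j rule: less_induct)
    case (less j)
    show ?case
    proof (cases j)
      case 0
      have "m dvd coeff (A * D) 0" using H by simp
      then show ?thesis using A0 0 by (simp add: coeff_mult_0)
    next
      case (Suc j')
      have "coeff (A * D) j = (\<Sum>i\<le>j. coeff A i * coeff D (j - i))" by (rule coeff_mult)
      also have "\<dots> = coeff A 0 * coeff D j + (\<Sum>i\<le>j'. coeff A (Suc i) * coeff D (j - Suc i))"
        unfolding Suc by (simp only: sum.atMost_Suc_shift diff_zero)
      finally have e: "coeff D j = coeff (A * D) j - (\<Sum>i\<le>j'. coeff A (Suc i) * coeff D (j - Suc i))"
        using A0 by simp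
      have "m dvd (\<Sum>i\<le>j'. coeff A (Suc i) * coeff D (j - Suc i))"
      proof (rule dvd_sum)
        fix i assume "i \<in> {..j'}"
        have "j - Suc i < j" using Suc by simp
        then have "m dvd coeff D (j - Suc i)" using less.IH less.prems by simp
        then show "m dvd coeff A (Suc i) * coeff D (j - Suc i)" by simp
      qed
      moreover have "m dvd coeff (A * D) j" using H less.prems by simp
      ultimately show ?thesis unfolding e by (intro dvd_diff)
    qed
  qed
qed

lemma subseq_mset: "subseq xs ys \<Longrightarrow> mset xs \<subseteq># mset ys"
proof (induction rule: list_emb.induct)
  case (list_emb_Nil ys) then show ?case by simp
next
  case (list_emb_Cons xs ys y) then show ?case
    by (metis (no_types) add_mset_add_single mset_subset_eq_add_left mset.simps(2) subset_mset.order_trans)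
next
  case (list_emb_Cons2 x y xs ys) then show ?case by simp
qed

lemma key_contra:
  fixes p q r :: nat and X Y :: "nat multiset"
  assumes pr: "prime p" and qp: "q < p"
    and XS: "set_mset X \<subseteq> {1..q}" and YS: "set_mset Y \<subseteq> {1..q}"
    and sz: "size X = size Y" "size X \<le> r" and ne: "X \<noteq> {#}"
    and dj: "\<forall>x. x \<in># X \<longrightarrow> x \<notin># Y"
    and H: "\<forall>j\<le>r. int p dvd coeff (Gp X - Gp Y) j"
  shows False
proof -
  define D where "D = Gp X - Gp Y"
  have prI: "prime (int p)" using pr by simp
  have degD: "degree D \<le> r"
    unfolding D_def using degree_diff_le_max[of "Gp X" "Gp Y"] Gp_degree[of X] Gp_degree[of Y] sz by simp
  have allc: "int p dvd coeff D j" for j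
  proof (cases "j \<le> r")
    case True then show ?thesis using H unfolding D_def by simp
  next
    case False then have "coeff D j = 0" using degD by (intro coeff_eq_0) simp
    then show ?thesis by simp
  qed
  then have "[:int p:] dvd D" by (subst const_poly_dvd_iff) simp
  then obtain E where DE: "D = [:int p:] * E" by blast
  obtain x0 where x0: "x0 \<in># X" using ne by blast
  have x0r: "1 \<le> x0" "x0 \<le> q" using x0 XS by auto
  have "coprime (int x0) (int p)"
  proof -
    have "\<not> p dvd x0" using x0r qp by (auto dest: dvd_imp_le)
    then have "coprime p x0" using pr by (simp add: prime_imp_coprime)
    then show ?thesis by (simp add: coprime_commute)
  qed
  then obtain u v where uv: "u * int x0 + v * int p = 1" using bezout_int[of "int x0" "int p"] by auto
  have "poly D u = int p * poly E u" using DE by simp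
  then have d1: "int p dvd poly (Gp X) u - poly (Gp Y) u" unfolding D_def by simp
  have "1 - int x0 * u = v * int p" using uv by (simp add: algebra_simps)
  then have "int p dvd 1 - int x0 * u" by simp
  moreover have "(1 - int x0 * u) dvd poly (Gp X) u"
    unfolding Gp_poly by (rule dvd_prod_mset) (use x0 in auto)
  ultimately have "int p dvd poly (Gp X) u" by (rule dvd_trans)
  then have "int p dvd poly (Gp X) u - (poly (Gp X) u - poly (Gp Y) u)" using d1 by (rule dvd_diff)
  then have "int p dvd poly (Gp Y) u" by simp
  then have "int p dvd (\<Prod>y\<in>#Y. 1 - int y * u)" unfolding Gp_poly .
  then obtain y where y: "y \<in># Y" "int p dvd 1 - int y * u"
    using prI by (auto simp: prime_dvd_prod_mset_iff)
  have "int p dvd (1 - int y * u) - (1 - int x0 * u)"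
    using y(2) \<open>int p dvd 1 - int x0 * u\<close> by (rule dvd_diff)
  then have "int p dvd (int x0 - int y) * u" by (simp add: algebra_simps)
  moreover have "\<not> int p dvd u"
  proof
    assume "int p dvd u"
    then have "int p dvd u * int x0 + v * int p" by simp
    then have "int p dvd 1" using uv by simp
    then show False using prI not_prime_unit by blast
  qed
  ultimately have "int p dvd int x0 - int y" using prI prime_dvd_mult_iff by blast
  moreover have "y \<le> q" "1 \<le> y" using y(1) YS by auto
  ultimately have "x0 = y"
  proof -
    assume a: "int p dvd int x0 - int y" "y \<le> q" "1 \<le> y"
    show "x0 = y"
    proof (rule ccontr)
      assume "x0 \<noteq> y"
      then have "int x0 - int y \<noteq> 0" by simp
      then have "\<bar>int p\<bar> \<le> \<bar>int x0 - int y\<bar>" using a(1) by (rule dvd_imp_le_int)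
      then show False using a x0r qp by linarith
    qed
  qed
  then show False using dj x0 y(1) by blast
qed

lemma size_inter_diff:
  fixes M N :: "'a multiset"
  shows "size (M \<inter># N) + size (M - N) = size M"
proof -
  have sub: "M \<inter># N \<subseteq># M" by simp
  have "size (M - N) = size (M - M \<inter># N)" by (simp add: diff_intersect_left_idem)
  also have "\<dots> = size M - size (M \<inter># N)" by (rule size_Diff_submset[OF sub])
  finally show ?thesis using size_mset_mono[OF sub] by simp
qed

lemma same_class_far:
  fixes p q n r :: nat and M N :: "nat multiset"
  assumes pr: "prime p" and qp: "q < p"
    and MS: "M \<in> multisets_of_size {1..q} n" and NS: "N \<in> multisets_of_size {1..q} n"
    and MN: "M \<noteq> N"
    and cl: "\<forall>j\<in>{1..r}. coeff (Gp M) j mod int p = coeff (Gp N) j mod int p"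
  shows "size (M - N) > r"
proof (rule ccontr)
  assume "\<not> ?thesis"
  then have small: "size (M - N) \<le> r" by simp
  define C0 where "C0 = M \<inter># N"
  define X where "X = M - N"
  define Y where "Y = N - M"
  have hM: "M = C0 + X"
  proof -
    have "C0 \<subseteq># M" unfolding C0_def by simp
    then have "C0 + (M - C0) = M" by (rule subset_mset.add_diff_inverse)
    moreover have "M - C0 = X" unfolding C0_def X_def by (simp add: diff_intersect_left_idem)
    ultimately show ?thesis by simp
  qed
  have hN: "N = C0 + Y"
  proof -
    have "C0 \<subseteq># N" unfolding C0_def by simp
    then have "C0 + (N - C0) = N" by (rule subset_mset.add_diff_inverse)
    moreover have "N - C0 = Y" unfolding C0_def Y_def by (simp add: diff_intersect_right_idem)
    ultimately show ?thesis by simp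
  qed
  have szM: "size M = n" "size N = n" using MS NS by (auto simp: multisets_of_size_def)
  have sz: "size X = size Y"
    using szM hM hN by (metis add_left_cancel size_union)
  have ne: "X \<noteq> {#}"
  proof
    assume "X = {#}"
    then have "size Y = 0" using sz by simp
    then have "Y = {#}" by simp
    then show False using hM hN \<open>X = {#}\<close> MN by simp
  qed
  have dj: "\<forall>x. x \<in># X \<longrightarrow> x \<notin># Y"
    unfolding X_def Y_def by (auto simp: in_diff_count)
  have XS: "set_mset X \<subseteq> {1..q}" using MS unfolding X_def multisets_of_size_def
    by (auto dest: in_diffD)
  have YS: "set_mset Y \<subseteq> {1..q}" using NS unfolding Y_def multisets_of_size_def
    by (auto dest: in_diffD)
  have H0: "\<forall>j\<le>r. int p dvd coeff (Gp C0 * (Gp X - Gp Y)) j"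
  proof (intro allI impI)
    fix j assume "j \<le> r"
    have eq: "Gp C0 * (Gp X - Gp Y) = Gp M - Gp N"
      unfolding hM hN Gp_plus by (simp add: algebra_simps)
    show "int p dvd coeff (Gp C0 * (Gp X - Gp Y)) j"
    proof (cases "j = 0")
      case True then show ?thesis unfolding eq by (simp add: Gp_coeff0)
    next
      case False
      then have "coeff (Gp M) j mod int p = coeff (Gp N) j mod int p" using cl \<open>j \<le> r\<close> by auto
      then have "int p dvd coeff (Gp M) j - coeff (Gp N) j" by (simp add: mod_eq_dvd_iff)
      then show ?thesis unfolding eq by simp
    qed
  qed
  have H: "\<forall>j\<le>r. int p dvd coeff (Gp X - Gp Y) j"
    by (rule cancel_low[OF Gp_coeff0 H0])
  show False
    by (rule key_contra[OF pr qp XS YS sz _ ne dj H]) (use small X_def in simp)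
qed

lemma lcs_bound: "lcs_len u v \<le> size (mset u \<inter># mset v)"
proof -
  define S where "S = {length w | w. subseq w u \<and> subseq w v}"
  have "S \<subseteq> {..length u}" unfolding S_def by (auto dest: list_emb_length)
  then have fin: "finite S" by (rule finite_subset) simp
  have nem: "S \<noteq> {}" unfolding S_def by (auto intro: exI[of _ "[]"])
  have "Max S \<le> size (mset u \<inter># mset v)"
  proof (rule Max.boundedI[OF fin nem])
    fix a assume "a \<in> S"
    then obtain w where w: "a = length w" "subseq w u" "subseq w v" unfolding S_def by blast
    have "mset w \<subseteq># mset u \<inter># mset v" using subseq_mset[OF w(2)] subseq_mset[OF w(3)] by simp
    then have "size (mset w) \<le> size (mset u \<inter># mset v)" by (rule size_mset_mono)
    then show "a \<le> size (mset u \<inter># mset v)" using w(1) by simp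
  qed
  then show ?thesis unfolding lcs_len_def S_def .
qed

lemma pigeon:
  fixes f :: "'a \<Rightarrow> 'b"
  assumes fS: "finite S" and fT: "finite T" and nT: "T \<noteq> {}" and im: "f ` S \<subseteq> T"
  shows "\<exists>c\<in>T. card S \<le> card T * card {x\<in>S. f x = c}"
proof (rule ccontr)
  assume "\<not> ?thesis"
  then have lt: "\<forall>c\<in>T. card T * card {x\<in>S. f x = c} < card S" by auto
  have "S = (\<Union>c\<in>T. {x\<in>S. f x = c})" using im by auto
  then have "card S \<le> (\<Sum>c\<in>T. card {x\<in>S. f x = c})"
    using card_UN_le[OF fT, of "\<lambda>c. {x\<in>S. f x = c}"] by simp
  then have "card T * card S \<le> card T * (\<Sum>c\<in>T. card {x\<in>S. f x = c})"
    by (rule mult_left_mono) simp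
  also have "\<dots> = (\<Sum>c\<in>T. card T * card {x\<in>S. f x = c})"
    by (rule sum_distrib_left)
  also have "\<dots> < (\<Sum>c\<in>T. card S)"
    by (rule sum_strict_mono[OF fT nT]) (use lt in auto)
  also have "\<dots> = card T * card S" by simp
  finally show False by simp
qed


theorem theorem4p5:
  fixes q n \<delta> :: nat
  assumes "q \<ge> 2" and "\<delta> \<ge> 2" and "n \<ge> \<delta>"
  shows "\<exists>C. C \<subseteq> words q n \<and>
           real (card C) \<ge> real ((n + q - 1) choose n) /
                              ((2 * real q + 2) ^ (\<delta> - 2) * (2 * real q + 1)) \<and>
           (\<forall>u\<in>C. \<forall>v\<in>C. u \<noteq> v \<longrightarrow> insdel_dist u v \<ge> 2 * \<delta>)"
proof -
  obtain p where pr: "prime p" and qp: "q < p" and p2q: "p \<le> 2*q"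
    using bertrand[of q] assms(1) by auto
  define r where "r = \<delta> - 1"
  have r1: "r \<ge> 1" and rd: "r = Suc (\<delta> - 2)" using assms(2) unfolding r_def by auto
  define S where "S = multisets_of_size {1..q} n"
  have fS: "finite S" unfolding S_def by (rule finite_multisets_of_size) simp
  have cS: "card S = (n + q - 1) choose n"
    unfolding S_def by (subst card_multisets_of_size) (simp_all add: add.commute)
  define cls where "cls M = map (\<lambda>j. coeff (Gp M) j mod int p) [1..<r+1]" for M
  define T where "T = {xs. set xs \<subseteq> {0..<int p} \<and> length xs = r}"
  have fT: "finite T" and cT: "card T = p^r"
    unfolding T_def using card_lists_length_eq[of "{0..<int p}" r] finite_lists_length_eq[of "{0..<int p}" r]
    by simp_all
  have p0: "p > 0" using prime_gt_0_nat[OF pr] .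
  have nT: "T \<noteq> {}"
  proof -
    have "replicate r 0 \<in> T" unfolding T_def using p0 by auto
    then show ?thesis by blast
  qed
  have im: "cls ` S \<subseteq> T"
    unfolding T_def cls_def using p0 by (auto simp: pos_mod_bound)
  obtain c where cT': "c \<in> T" and big: "card S \<le> card T * card {M\<in>S. cls M = c}"
    using pigeon[OF fS fT nT im] by blast
  define F where "F = {M\<in>S. cls M = c}"
  define Cd where "Cd = sorted_list_of_multiset ` F"
  have inj: "inj_on sorted_list_of_multiset F"
    by (rule inj_on_inverseI[where g = mset]) simp
  have cCd: "card Cd = card F" unfolding Cd_def by (rule card_image[OF inj])
  have sub: "Cd \<subseteq> words q n"
  proof
    fix u assume "u \<in> Cd"
    then obtain M where M: "M \<in> F" "u = sorted_list_of_multiset M" unfolding Cd_def by blast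
    have "length u = size (mset u)" by simp
    also have "mset u = M" using M(2) by simp
    finally have "length u = size M" .
    then show "u \<in> words q n" using M unfolding words_def F_def S_def multisets_of_size_def by auto
  qed
  have bound: "real (card Cd) \<ge> real ((n + q - 1) choose n) /
                              ((2 * real q + 2) ^ (\<delta> - 2) * (2 * real q + 1))"
  proof -
    have ppos: "real (p^r) > 0" using p0 by simp
    have pr_le: "real (p^r) \<le> (2 * real q + 2) ^ (\<delta> - 2) * (2 * real q + 1)"
    proof -
      have "real (p^r) = real p ^ (\<delta> - 2) * real p" unfolding rd by simp
      also have "\<dots> \<le> (2 * real q + 2) ^ (\<delta> - 2) * (2 * real q + 1)"
        using p2q by (intro mult_mono power_mono) simp_all
      finally show ?thesis .
    qed
    have "real ((n + q - 1) choose n) / ((2 * real q + 2) ^ (\<delta> - 2) * (2 * real q + 1))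
          \<le> real ((n + q - 1) choose n) / real (p^r)"
      using ppos pr_le by (intro divide_left_mono) simp_all
    also have "\<dots> \<le> real (card F)"
    proof -
      have "real (card S) \<le> real (p^r) * real (card F)" using big cT unfolding F_def
        by (metis of_nat_le_iff of_nat_mult)
      then show ?thesis using ppos cS by (simp add: divide_le_eq mult.commute)
    qed
    finally show ?thesis using cCd by simp
  qed
  have dist: "\<forall>u\<in>Cd. \<forall>v\<in>Cd. u \<noteq> v \<longrightarrow> insdel_dist u v \<ge> 2 * \<delta>"
  proof (intro ballI impI)
    fix u v assume u: "u \<in> Cd" and v: "v \<in> Cd" and uv: "u \<noteq> v"
    obtain M where M: "M \<in> F" "u = sorted_list_of_multiset M" using u unfolding Cd_def by blast
    obtain N where N: "N \<in> F" "v = sorted_list_of_multiset N" using v unfolding Cd_def by blast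
    have MN: "M \<noteq> N" using uv M N by auto
    have MS: "M \<in> S" "N \<in> S" and cl: "cls M = cls N" using M N unfolding F_def by auto
    have cl': "\<forall>j\<in>{1..r}. coeff (Gp M) j mod int p = coeff (Gp N) j mod int p"
      using cl unfolding cls_def map_eq_conv by auto
    have far: "size (M - N) > r"
      by (rule same_class_far[OF pr qp _ _ MN cl']) (use MS S_def in auto)
    have szM: "size M = n" "size N = n" using MS unfolding S_def multisets_of_size_def by auto
    have mu: "mset u = M" "mset v = N" using M N by simp_all
    have lu: "length u = n" "length v = n" using szM mu by (metis size_mset)+
    have "lcs_len u v \<le> size (M \<inter># N)" using lcs_bound[of u v] mu by simp
    also have "\<dots> = n - size (M - N)" using size_inter_diff[of M N] szM by simp
    finally have "lcs_len u v + \<delta> \<le> n" using far r_def assms by linarith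
    then show "insdel_dist u v \<ge> 2 * \<delta>" unfolding insdel_dist_def using lu by simp
  qed
  show ?thesis using sub bound dist by blast
qed


end
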